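(* Let $\mathcal T$ be the suffix tree of a text of length $n$ and $d=\lceil\log_2 n\rceil$. For any sequence of nodes $u_1,\dots,u_t$ of $\mathcal T$ with $u_i=\mathrm{wlink}(u_{i-1},a_{i-1})$ for some symbols $a_{i-1}$ ($2\le i\le t$), at most one of the Weiner links $\mathrm{wlink}(u_{i-1},a_{i-1})$ is difficult.
   Context: For a node $v$ of $\mathcal T$ whose path label is $p$ and a symbol $c$ such that $cp$ occurs in the text, $\mathrm{wlink}(v,c)$ is the locus of $cp$ in $\mathcal T$. A node is heavy if it has at least $d$ leaf descendants and light otherwise. A Weiner link $\mathrm{wlink}(v,a)$ is difficult if its target node is light and its source node $v$ is heavy. *)

theory Defs
  imports Complex_Main "HOL-Library.Sublist"
begin

text \<open>Nodes are identified with their path labels (strings over the alphabet):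
  the root (empty label), the internal nodes (right-branching substrings),
  and the leaves (the nonempty suffixes of T).\<close>

definition st_leaf :: "'a list \<Rightarrow> 'a list \<Rightarrow> bool" where
  "st_leaf T p \<longleftrightarrow> (\<exists>i < length T. p = drop i T)"

definition st_node :: "'a list \<Rightarrow> 'a list \<Rightarrow> bool" where
  "st_node T p \<longleftrightarrow> sublist p T \<and>
     (p = [] \<or> st_leaf T p \<or>
      (\<exists>a b. a \<noteq> b \<and> sublist (p @ [a]) T \<and> sublist (p @ [b]) T))"

definition leaf_desc :: "'a list \<Rightarrow> 'a list \<Rightarrow> 'a list set" where
  "leaf_desc T p = {s. st_leaf T s \<and> prefix p s}"

definition locus :: "'a list \<Rightarrow> 'a list \<Rightarrow> 'a list" where
  "locus T s = (THE v. st_node T v \<and> prefix s v \<and>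
      (\<forall>w. st_node T w \<and> prefix s w \<longrightarrow> length v \<le> length w))"

definition wlink :: "'a list \<Rightarrow> 'a list \<Rightarrow> 'a \<Rightarrow> 'a list" where
  "wlink T v c = locus T (c # v)"

definition heavy :: "'a list \<Rightarrow> nat \<Rightarrow> 'a list \<Rightarrow> bool" where
  "heavy T d v \<longleftrightarrow> card (leaf_desc T v) \<ge> d"

definition difficult :: "'a list \<Rightarrow> nat \<Rightarrow> 'a list \<Rightarrow> 'a \<Rightarrow> bool" where
  "difficult T d v c \<longleftrightarrow> heavy T d v \<and> \<not> heavy T d (wlink T v c)"

end

theory Submission
  imports Defs
begin

lemma locus_prop:
  assumes "sublist s T" "s \<noteq> []"
  shows "st_node T (locus T s) \<and> prefix s (locus T s)"
proof -
  let ?P = "\<lambda>v. st_node T v \<and> prefix s v"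
  obtain xs ys where T: "T = xs @ s @ ys" using assms(1) by (auto simp: sublist_def)
  have lf: "st_leaf T (s @ ys)" unfolding st_leaf_def
    using T assms(2) by (intro exI[of _ "length xs"]) auto
  have "?P (s @ ys)" using lf T unfolding st_node_def by auto
  then have ex: "\<exists>v. ?P v" by blast
  obtain k where k: "\<exists>v. ?P v \<and> length v = k" "\<And>m. m < k \<Longrightarrow> \<not>(\<exists>v. ?P v \<and> length v = m)"
    using ex_least_nat_le[of "\<lambda>k. \<exists>v. ?P v \<and> length v = k"] ex
    by (metis exists_least_iff)
  obtain v where v: "?P v" "length v = k" using k(1) by blast
  have min: "\<And>w. ?P w \<Longrightarrow> length v \<le> length w" using k(2) v(2) by (metis not_le)
  have uniq: "w = v" if w: "?P w" "\<forall>x. ?P x \<longrightarrow> length w \<le> length x" for w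
  proof (rule ccontr)
    assume ne: "w \<noteq> v"
    have len: "length w = length v" using w min v(1) by (simp add: le_antisym)
    have par: "w \<parallel> v" using ne len
      by (metis prefix_length_le prefix_length_prefix prefix_order.eq_iff parallelI)
    obtain as b bs c cs where dec: "b \<noteq> c" "w = as @ b # bs" "v = as @ c # cs"
      using parallel_decomp[OF par] by blast
    have ps: "prefix s as"
    proof (rule ccontr)
      assume "\<not> prefix s as"
      have p1: "prefix s (as @ b # bs)" and p2: "prefix s (as @ c # cs)" using w v dec by auto
      have "length as < length s"
      proof (rule ccontr)
        assume "\<not> length as < length s"
        then have "prefix s as" using p1
          by (metis append_prefixD not_le prefix_length_prefix prefix_order.dual_order.refl prefix_prefix)
        then show False using \<open>\<not> prefix s as\<close> by simp
      qed
      then have "s ! length as = b" "s ! length as = c" using p1 p2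
        by (metis nth_append_length prefix_def nth_append[of s] not_less less_irrefl | metis)+
      then show False using dec(1) by simp
    qed
    have sw: "sublist w T" "sublist v T" using w v unfolding st_node_def by auto
    have "sublist (as @ [b]) T" using sw(1) dec(2)
      by (metis append.assoc append_Cons append_Nil sublist_order.dual_order.trans sublist_append_rightI)
    moreover have "sublist (as @ [c]) T" using sw(2) dec(3)
      by (metis append.assoc append_Cons append_Nil sublist_order.dual_order.trans sublist_append_rightI)
    ultimately have "st_node T as" unfolding st_node_def using dec(1)
      by (meson sublist_order.dual_order.trans sublist_append_rightI)
    then have "length w \<le> length as" using w ps by blast
    then show False using dec(2) by simp
  qed
  have "?P v \<and> (\<forall>w. ?P w \<longrightarrow> length v \<le> length w)" using v min by blast
  then have "?P (THE v. ?P v \<and> (\<forall>w. ?P w \<longrightarrow> length v \<le> length w))"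
    by (rule theI2[where P="\<lambda>v. ?P v \<and> (\<forall>w. ?P w \<longrightarrow> length v \<le> length w)"]) (use uniq in blast)+
  then show ?thesis unfolding locus_def by (simp add: conj_assoc)
qed

lemma finite_leaf_desc: "finite (leaf_desc T v)"
proof -
  have "leaf_desc T v \<subseteq> (\<lambda>i. drop i T) ` {..<length T}"
    unfolding leaf_desc_def st_leaf_def by auto
  then show ?thesis by (rule finite_subset) auto
qed

lemma card_wlink:
  assumes "sublist (c # v) T"
  shows "card (leaf_desc T (wlink T v c)) \<le> card (leaf_desc T v)"
proof -
  have lp: "prefix (c # v) (wlink T v c)" using locus_prop[OF assms] unfolding wlink_def by blast
  show ?thesis
  proof (cases "v = []")
    case True
    have "leaf_desc T (wlink T v c) \<subseteq> leaf_desc T v" using True unfolding leaf_desc_def by auto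
    then show ?thesis by (simp add: card_mono finite_leaf_desc)
  next
    case False
    have sub: "tl ` leaf_desc T (wlink T v c) \<subseteq> leaf_desc T v"
    proof
      fix x assume "x \<in> tl ` leaf_desc T (wlink T v c)"
      then obtain s i where s: "x = tl s" "i < length T" "s = drop i T" "prefix (wlink T v c) s"
        unfolding leaf_desc_def st_leaf_def by auto
      have ps: "prefix (c # v) s" using lp s(4) by (rule prefix_order.trans)
      then have px: "prefix v x" using s(1) by (auto simp: prefix_def)
      then have "x \<noteq> []" using False by auto
      then have "Suc i < length T" using s by (metis drop_Suc length_drop length_greater_0_conv tl_drop zero_less_diff)
      moreover have "x = drop (Suc i) T" using s by (simp add: drop_Suc tl_drop)
      ultimately show "x \<in> leaf_desc T v" using px unfolding leaf_desc_def st_leaf_def by auto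
    qed
    have inj: "inj_on tl (leaf_desc T (wlink T v c))"
    proof (rule inj_onI)
      fix x y assume x: "x \<in> leaf_desc T (wlink T v c)" and y: "y \<in> leaf_desc T (wlink T v c)"
        and e: "tl x = tl y"
      have "prefix (c # v) x" "prefix (c # v) y" using x y lp unfolding leaf_desc_def
        using prefix_order.trans by blast+
      then obtain x' y' where "x = c # x'" "y = c # y'" by (auto simp: prefix_def)
      then show "x = y" using e by simp
    qed
    have "card (leaf_desc T (wlink T v c)) = card (tl ` leaf_desc T (wlink T v c))"
      using inj by (simp add: card_image)
    also have "\<dots> \<le> card (leaf_desc T v)" using sub by (simp add: card_mono finite_leaf_desc)
    finally show ?thesis .
  qed
qed

theorem proposition7:
  fixes T :: "'a list" and n d t :: nat and u :: "nat \<Rightarrow> 'a list" and a :: "nat \<Rightarrow> 'a"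
  assumes "length T = n" and "n \<ge> 1"
    and "last T \<notin> set (butlast T)"
    and "d = nat \<lceil>log 2 (real n)\<rceil>"
    and "\<forall>i. 1 \<le> i \<and> i \<le> t \<longrightarrow> st_node T (u i)"
    and "\<forall>i. 2 \<le> i \<and> i \<le> t \<longrightarrow>
           sublist (a (i - 1) # u (i - 1)) T \<and> u i = wlink T (u (i - 1)) (a (i - 1))"
  shows "card {i \<in> {2..t}. difficult T d (u (i - 1)) (a (i - 1))} \<le> 1"
proof -
  define L where "L i = card (leaf_desc T (u i))" for i
  have step: "L i \<le> L (i - 1)" if "2 \<le> i" "i \<le> t" for i
    using assms(6) that card_wlink unfolding L_def by metis
  have mono: "L (i + k) \<le> L i" if "1 \<le> i" "i + k \<le> t" for i k
    using that
  proof (induction k)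
    case 0 then show ?case by simp
  next
    case (Suc k)
    have "L (i + Suc k) \<le> L (i + Suc k - 1)" using Suc.prems by (intro step) auto
    also have "\<dots> = L (i + k)" by simp
    also have "\<dots> \<le> L i" using Suc by simp
    finally show ?case .
  qed
  let ?S = "{i \<in> {2..t}. difficult T d (u (i - 1)) (a (i - 1))}"
  have D: "d \<le> L (i - 1) \<and> L i < d" if "i \<in> ?S" for i
    using that assms(6) unfolding difficult_def heavy_def L_def by auto
  have "\<forall>x\<in>?S. \<forall>y\<in>?S. x = y"
  proof (intro ballI, rule ccontr)
    fix x y assume x: "x \<in> ?S" and y: "y \<in> ?S" and ne: "x \<noteq> y"
    have *: False if "i \<in> ?S" "j \<in> ?S" "i < j" for i j
    proof -
      have "L (i + (j - 1 - i)) \<le> L i" using that by (intro mono) auto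
      then have "L (j - 1) \<le> L i" using that(3) by (simp add: algebra_simps)
      then show False using D[OF that(1)] D[OF that(2)] by simp
    qed
    show False using ne *[OF x y] *[OF y x] by linarith
  qed
  then show ?thesis by (simp add: card_le_Suc0_iff_eq)
qed

end
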